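(* Consider the Keyfitz–Kranzer system $\partial_t u_1 + \partial_x(u_1^2 - u_2) = 0$, $\partial_t u_2 + \partial_x(\tfrac{1}{3}u_1^3 - u_1) = 0$ with flux $f(u) = (u_1^2 - u_2,\ \tfrac13 u_1^3 - u_1)^T$ for $u=(u_1,u_2)\in\mathbb{R}^2$, entropy $U(u) = \exp(\tfrac12 u_1^2 - u_2)$, entropy variables $w(u) = (u_1 U(u),\ -U(u))^T$ and flux potential $\psi(u) = (\tfrac23 u_1^3 - u_1 u_2)\,U(u)$. For $u_-=(u_{1,-},u_{2,-})$, $u_+=(u_{1,+},u_{2,+})\in\mathbb{R}^2$ write $U_\pm = U(u_\pm)$ and define $f^{\mathrm{num}}(u_-,u_+) = (f^{\mathrm{num}}_1, f^{\mathrm{num}}_2)$ by \[ f^{\mathrm{num}}_1 = \tfrac16\bigl(u_{1,+}^2 + u_{1,+}u_{1,-} + u_{1,-}^2\bigr) + \tfrac12\bigl(\log U_+ + \log U_-\bigr), \] \[ f^{\mathrm{num}}_2 = \tfrac12(u_{1,+}+u_{1,-})\, f^{\mathrm{num}}_1 - \tfrac12\Bigl(\tfrac16 u_{1,+}^3 + u_{1,+}\log U_+ + \tfrac16 u_{1,-}^3 + u_{1,-}\log U_-\Bigr) - \frac{\tfrac12(U_+ + U_-)}{L(U_-,U_+)}\cdot \tfrac12(u_{1,+}+u_{1,-}), \] where $L(a,b) = \frac{b-a}{\log b - \log a}$ for $a\neq b$ and $L(a,a)=a$ (logarithmic mean, $a,b>0$). Then $f^{\mathrm{num}}$ is consistent,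 i.e. $f^{\mathrm{num}}(u,u) = f(u)$ for all $u\in\mathbb{R}^2$, and entropy-conservative, i.e. for all $u_-,u_+\in\mathbb{R}^2$, \[ \bigl(w(u_+) - w(u_-)\bigr)\cdot f^{\mathrm{num}}(u_-,u_+) = \psi(u_+) - \psi(u_-). \]
   Context: Here $\cdot$ denotes the Euclidean inner product on $\mathbb{R}^2$ and $\log$ is the natural logarithm; note $\log U(u) = \tfrac12 u_1^2 - u_2$. The convention $L(a,a)=a$ is the continuous extension of the logarithmic mean to the diagonal. *)

theory Defs
  imports "HOL-Analysis.Analysis"
begin

definition KK_flux :: "real \<times> real \<Rightarrow> real \<times> real" where
  "KK_flux u = (fst u ^ 2 - snd u, fst u ^ 3 / 3 - fst u)"

definition KK_U :: "real \<times> real \<Rightarrow> real" where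
  "KK_U u = exp (fst u ^ 2 / 2 - snd u)"

definition KK_w :: "real \<times> real \<Rightarrow> real \<times> real" where
  "KK_w u = (fst u * KK_U u, - KK_U u)"

definition KK_psi :: "real \<times> real \<Rightarrow> real" where
  "KK_psi u = (2/3 * fst u ^ 3 - fst u * snd u) * KK_U u"

definition logmean :: "real \<Rightarrow> real \<Rightarrow> real" where
  "logmean a b = (if a = b then a else (b - a) / (ln b - ln a))"

definition fnum :: "real \<times> real \<Rightarrow> real \<times> real \<Rightarrow> real \<times> real" where
  "fnum um up =
    (let a = fst um; b = fst up; Um = KK_U um; Up = KK_U up;
         f1 = (b^2 + b*a + a^2) / 6 + (ln Up + ln Um) / 2;
         f2 = (b + a) / 2 * f1
              - (b^3 / 6 + b * ln Up + a^3 / 6 + a * ln Um) / 2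
              - ((Up + Um) / 2) / logmean Um Up * ((b + a) / 2)
     in (f1, f2))"

end

theory Submission
  imports Defs
begin

lemma key: "(KK_U up - KK_U um) / logmean (KK_U um) (KK_U up) = ln (KK_U up) - ln (KK_U um)"
proof (cases "KK_U um = KK_U up")
  case True then show ?thesis by (simp add: logmean_def)
next
  case False
  have "ln (KK_U up) \<noteq> ln (KK_U um)" using False by (simp add: KK_U_def)
  then show ?thesis using False by (simp add: logmean_def field_simps)
qed

lemma gen: "(- p - - q) * (A - B - D) = - (p - q) * (A - B) + (p - q) * (D::real)"
  by algebra

lemma alg:
  fixes a b zp zm Up Um L :: real
  assumes k: "(Up - Um) / L = (b^2/2 - zp) - (a^2/2 - zm)"
  shows "(b*Up - a*Um) * ((b^2 + b*a + a^2) / 6 + ((b^2/2 - zp) + (a^2/2 - zm)) / 2)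
       + (- Up - - Um) * ((b + a) / 2 * ((b^2 + b*a + a^2) / 6 + ((b^2/2 - zp) + (a^2/2 - zm)) / 2)
              - (b^3 / 6 + b * (b^2/2 - zp) + a^3 / 6 + a * (a^2/2 - zm)) / 2
              - ((Up + Um) / 2) / L * ((b + a) / 2))
       = (2/3 * b^3 - b*zp) * Up - (2/3 * a^3 - a*zm) * Um"
proof -
  have e: "(Up - Um) * (((Up + Um) / 2) / L * ((b + a) / 2))
      = ((b^2/2 - zp) - (a^2/2 - zm)) * (Up + Um) * (b + a) / 4"
  proof -
    have "(Up - Um) * (((Up + Um) / 2) / L * ((b + a) / 2))
       = ((Up - Um) / L) * (Up + Um) * (b + a) / 4" by (cases "L = 0") (simp_all add: field_simps)
    then show ?thesis using k by simp
  qed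
  have "(- Up - - Um) * ((b + a) / 2 * ((b^2 + b*a + a^2) / 6 + ((b^2/2 - zp) + (a^2/2 - zm)) / 2)
              - (b^3 / 6 + b * (b^2/2 - zp) + a^3 / 6 + a * (a^2/2 - zm)) / 2
              - ((Up + Um) / 2) / L * ((b + a) / 2))
     = - (Up - Um) * ((b + a) / 2 * ((b^2 + b*a + a^2) / 6 + ((b^2/2 - zp) + (a^2/2 - zm)) / 2)
              - (b^3 / 6 + b * (b^2/2 - zp) + a^3 / 6 + a * (a^2/2 - zm)) / 2)
       + (Up - Um) * (((Up + Um) / 2) / L * ((b + a) / 2))"
    by (rule gen)
  also have "\<dots> = - (Up - Um) * ((b + a) / 2 * ((b^2 + b*a + a^2) / 6 + ((b^2/2 - zp) + (a^2/2 - zm)) / 2)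
              - (b^3 / 6 + b * (b^2/2 - zp) + a^3 / 6 + a * (a^2/2 - zm)) / 2)
       + ((b^2/2 - zp) - (a^2/2 - zm)) * (Up + Um) * (b + a) / 4" using e by simp
  finally have s: "(- Up - - Um) * ((b + a) / 2 * ((b^2 + b*a + a^2) / 6 + ((b^2/2 - zp) + (a^2/2 - zm)) / 2)
              - (b^3 / 6 + b * (b^2/2 - zp) + a^3 / 6 + a * (a^2/2 - zm)) / 2
              - ((Up + Um) / 2) / L * ((b + a) / 2)) = - (Up - Um) * ((b + a) / 2 * ((b^2 + b*a + a^2) / 6 + ((b^2/2 - zp) + (a^2/2 - zm)) / 2)
              - (b^3 / 6 + b * (b^2/2 - zp) + a^3 / 6 + a * (a^2/2 - zm)) / 2)
       + ((b^2/2 - zp) - (a^2/2 - zm)) * (Up + Um) * (b + a) / 4" .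
  show ?thesis unfolding s by (simp add: field_simps power2_eq_square power3_eq_cube)
qed

theorem mainTheorem1:
  shows "(\<forall>u. fnum u u = KK_flux u) \<and>
         (\<forall>um up. inner (KK_w up - KK_w um) (fnum um up) = KK_psi up - KK_psi um)"
proof (intro conjI allI)
  fix u :: "real \<times> real"
  obtain a v where u: "u = (a, v)" by (cases u)
  have "KK_U u > 0" by (simp add: KK_U_def)
  then show "fnum u u = KK_flux u"
    by (simp add: fnum_def KK_flux_def logmean_def u Let_def KK_U_def field_simps power2_eq_square power3_eq_cube)
next
  fix um up :: "real \<times> real"
  obtain a zm where um: "um = (a, zm)" by (cases um)
  obtain b zp where up: "up = (b, zp)" by (cases up)
  have lp: "ln (KK_U up) = b^2/2 - zp" by (simp add: KK_U_def up)
  have lm: "ln (KK_U um) = a^2/2 - zm" by (simp add: KK_U_def um)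
  have k: "(KK_U up - KK_U um) / logmean (KK_U um) (KK_U up) = (b^2/2 - zp) - (a^2/2 - zm)"
    using key[of up um] lp lm by simp
  have "inner (KK_w up - KK_w um) (fnum um up) =
    (b*KK_U up - a*KK_U um) * ((b^2 + b*a + a^2) / 6 + ((b^2/2 - zp) + (a^2/2 - zm)) / 2)
       + (- KK_U up - - KK_U um) * ((b + a) / 2 * ((b^2 + b*a + a^2) / 6 + ((b^2/2 - zp) + (a^2/2 - zm)) / 2)
              - (b^3 / 6 + b * (b^2/2 - zp) + a^3 / 6 + a * (a^2/2 - zm)) / 2
              - ((KK_U up + KK_U um) / 2) / logmean (KK_U um) (KK_U up) * ((b + a) / 2))"
    unfolding fnum_def Let_def KK_w_def inner_prod_def lp lm by (simp add: um up)
  also have "\<dots> = KK_psi up - KK_psi um"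
    unfolding alg[OF k] by (simp add: KK_psi_def um up)
  finally show "inner (KK_w up - KK_w um) (fnum um up) = KK_psi up - KK_psi um" .
qed

end
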